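(* Let $A$ be a T-brace, let $n$ be a natural number and suppose that $a\in\zeta_n(\star,A)\setminus\zeta(\star,A)$. If $a$ has infinite order in $(A,+)$, then $a\star a\neq 0$.
   Context: A (left) brace is a set $A$ with two operations $+$ and $\cdot$ such that $(A,+)$ is an abelian group, $(A,\cdot)$ is a group, and $a(b+c)=ab+ac-a$ for all $a,b,c\in A$. Put $a\star b=ab-a-b$. A subbrace is a subset which is a subgroup of both $(A,+)$ and $(A,\cdot)$; a subbrace $L$ is an ideal if $a\star z, z\star a\in L$ for all $a\in A$, $z\in L$, and then the quotient brace $A/L$ is defined. $A$ is a T-brace if whenever $I$ is an ideal of $J$ and $J$ is an ideal of $A$, then $I$ is an ideal of $A$. The $\star$-center is $\zeta(\star,A)=\{a: a\star x=x\star a=0\ \forall x\}$; the upper $\star$-central series is $\zeta_0(\star,A)=0$, $\zeta_{n+1}(\star,A)/\zeta_n(\star,A)=\zeta(\star,A/\zeta_n(\star,A))$. *)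

theory Defs
  imports "HOL-Algebra.Algebra"
begin

definition brace :: "('a, 'm) ring_scheme \<Rightarrow> bool" where
  "brace R \<longleftrightarrow> abelian_group R \<and> group R \<and>
     (\<forall>a\<in>carrier R. \<forall>b\<in>carrier R. \<forall>c\<in>carrier R.
        a \<otimes>\<^bsub>R\<^esub> (b \<oplus>\<^bsub>R\<^esub> c) = (a \<otimes>\<^bsub>R\<^esub> b) \<oplus>\<^bsub>R\<^esub> (a \<otimes>\<^bsub>R\<^esub> c) \<ominus>\<^bsub>R\<^esub> a)"

definition bstar :: "('a, 'm) ring_scheme \<Rightarrow> 'a \<Rightarrow> 'a \<Rightarrow> 'a" where
  "bstar R a b = (a \<otimes>\<^bsub>R\<^esub> b) \<ominus>\<^bsub>R\<^esub> a \<ominus>\<^bsub>R\<^esub> b"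

definition subbrace :: "('a, 'm) ring_scheme \<Rightarrow> 'a set \<Rightarrow> bool" where
  "subbrace R L \<longleftrightarrow> subgroup L (add_monoid R) \<and> subgroup L R"

definition brace_ideal :: "('a, 'm) ring_scheme \<Rightarrow> 'a set \<Rightarrow> bool" where
  "brace_ideal R L \<longleftrightarrow> subbrace R L \<and>
     (\<forall>a\<in>carrier R. \<forall>z\<in>L. bstar R a z \<in> L \<and> bstar R z a \<in> L)"

text \<open>T-brace: ideals of ideals are ideals. An ideal I of J is an ideal of the
  brace J (the substructure with carrier J).\<close>

definition T_brace :: "('a, 'm) ring_scheme \<Rightarrow> bool" where
  "T_brace R \<longleftrightarrow> brace R \<and>
     (\<forall>I J. brace_ideal R J \<and> brace_ideal (R\<lparr>carrier := J\<rparr>) I \<longrightarrow> brace_ideal R I)"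

definition star_center :: "('a, 'm) ring_scheme \<Rightarrow> 'a set" where
  "star_center R = {a \<in> carrier R. \<forall>x\<in>carrier R.
       bstar R a x = \<zero>\<^bsub>R\<^esub> \<and> bstar R x a = \<zero>\<^bsub>R\<^esub>}"

definition bcoset :: "('a, 'm) ring_scheme \<Rightarrow> 'a set \<Rightarrow> 'a \<Rightarrow> 'a set" where
  "bcoset R L a = {a \<oplus>\<^bsub>R\<^esub> z | z. z \<in> L}"

definition brep :: "'a set \<Rightarrow> 'a" where
  "brep S = (SOME s. s \<in> S)"

definition quotient_brace :: "('a, 'm) ring_scheme \<Rightarrow> 'a set \<Rightarrow> 'a set ring" where
  "quotient_brace R L =
     \<lparr> partial_object.carrier = bcoset R L ` carrier R,
       monoid.mult = (\<lambda>U V. bcoset R L (brep U \<otimes>\<^bsub>R\<^esub> brep V)),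
       monoid.one = bcoset R L \<one>\<^bsub>R\<^esub>,
       ring.zero = bcoset R L \<zero>\<^bsub>R\<^esub>,
       ring.add = (\<lambda>U V. bcoset R L (brep U \<oplus>\<^bsub>R\<^esub> brep V)) \<rparr>"

fun star_zeta :: "('a, 'm) ring_scheme \<Rightarrow> nat \<Rightarrow> 'a set" where
  "star_zeta R 0 = {\<zero>\<^bsub>R\<^esub>}"
| "star_zeta R (Suc n) = {a \<in> carrier R.
      bcoset R (star_zeta R n) a \<in> star_center (quotient_brace R (star_zeta R n))}"

end

theory Submission
  imports Defs
begin

locale brc = abelian_group R + group R for R :: "('a, 'm) ring_scheme" (structure) +
  assumes distr: "\<lbrakk>a \<in> carrier R; b \<in> carrier R; c \<in> carrier R\<rbrakk> \<Longrightarrow>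
     a \<otimes> (b \<oplus> c) = (a \<otimes> b) \<oplus> (a \<otimes> c) \<ominus> a"
begin

lemma canc2:
  assumes "x \<in> carrier R" "y \<in> carrier R"
  shows "x \<oplus> (\<ominus> x \<oplus> y) = y" and "x \<oplus> (y \<oplus> \<ominus> x) = y" and "\<ominus> x \<oplus> (x \<oplus> y) = y" and "\<ominus> x \<oplus> (y \<oplus> x) = y"
  using assms by (simp_all add: a_lcomm[of y "\<ominus> x"] a_lcomm[of w "\<ominus> x"] a_lcomm[of y x] a_lcomm[of w x]
     a_comm[of z "\<ominus> x"] a_comm[of y "\<ominus> x"] a_comm[of z x] a_comm[of y x] r_neg1 r_neg2)

lemma canc3:
  assumes "x \<in> carrier R" "y \<in> carrier R" "z \<in> carrier R"
  shows "x \<oplus> (y \<oplus> (\<ominus> x \<oplus> z)) = y \<oplus> z" and "x \<oplus> (y \<oplus> (z \<oplus> \<ominus> x)) = y \<oplus> z" and "\<ominus> x \<oplus> (y \<oplus> (x \<oplus> z)) = y \<oplus> z" and "\<ominus> x \<oplus> (y \<oplus> (z \<oplus> x)) = y \<oplus> z"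
  using assms by (simp_all add: a_lcomm[of y "\<ominus> x"] a_lcomm[of w "\<ominus> x"] a_lcomm[of y x] a_lcomm[of w x]
     a_comm[of z "\<ominus> x"] a_comm[of y "\<ominus> x"] a_comm[of z x] a_comm[of y x] r_neg1 r_neg2)

lemma canc4:
  assumes "x \<in> carrier R" "y \<in> carrier R" "z \<in> carrier R" "w \<in> carrier R"
  shows "x \<oplus> (y \<oplus> (w \<oplus> (\<ominus> x \<oplus> z))) = y \<oplus> (w \<oplus> z)" and "x \<oplus> (y \<oplus> (w \<oplus> (z \<oplus> \<ominus> x))) = y \<oplus> (w \<oplus> z)" and "\<ominus> x \<oplus> (y \<oplus> (w \<oplus> (x \<oplus> z))) = y \<oplus> (w \<oplus> z)" and "\<ominus> x \<oplus> (y \<oplus> (w \<oplus> (z \<oplus> x))) = y \<oplus> (w \<oplus> z)"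
  using assms by (simp_all add: a_lcomm[of y "\<ominus> x"] a_lcomm[of w "\<ominus> x"] a_lcomm[of y x] a_lcomm[of w x]
     a_comm[of z "\<ominus> x"] a_comm[of y "\<ominus> x"] a_comm[of z x] a_comm[of y x] r_neg1 r_neg2)

lemmas canc = canc2 canc3 canc4

lemmas asimp = minus_eq a_ac canc r_neg l_neg minus_add add.inv_one

abbreviation st where "st a b \<equiv> bstar R a b"
definition lam where "lam a b = st a b \<oplus> b"

lemma zero_one: "\<zero> = \<one>"
proof -
  have "\<one> \<otimes> (\<zero> \<oplus> \<zero>) = (\<one> \<otimes> \<zero>) \<oplus> (\<one> \<otimes> \<zero>) \<ominus> \<one>" by (rule distr) auto
  hence "\<zero> = \<zero> \<ominus> \<one>" by simp
  thus ?thesis by (metis add.inv_closed add.inv_one add.l_one add.r_one minus_eq minus_minus one_closed zero_closed add.inv_solve_left)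
qed

lemma m_zero_r[simp]: "x \<in> carrier R \<Longrightarrow> x \<otimes> \<zero> = x"
  by (simp add: zero_one)
lemma m_zero_l[simp]: "x \<in> carrier R \<Longrightarrow> \<zero> \<otimes> x = x"
  by (simp add: zero_one)

lemma st_closed[simp,intro]: "a \<in> carrier R \<Longrightarrow> b \<in> carrier R \<Longrightarrow> st a b \<in> carrier R"
  by (simp add: bstar_def)

lemma lam_closed[simp,intro]: "a \<in> carrier R \<Longrightarrow> b \<in> carrier R \<Longrightarrow> lam a b \<in> carrier R"
  by (simp add: lam_def)

lemma mult_eq: "a \<in> carrier R \<Longrightarrow> b \<in> carrier R \<Longrightarrow> a \<otimes> b = a \<oplus> st a b \<oplus> b"
  by (simp add: bstar_def asimp)


lemma lam_eq: "a \<in> carrier R \<Longrightarrow> b \<in> carrier R \<Longrightarrow> a \<otimes> b = a \<oplus> lam a b"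
  by (simp add: mult_eq lam_def a_assoc)

lemma st_add: assumes "x \<in> carrier R" "b \<in> carrier R" "c \<in> carrier R"
  shows "st x (b \<oplus> c) = st x b \<oplus> st x c"
  using assms by (simp add: bstar_def distr asimp)

lemma lam_add: assumes "x \<in> carrier R" "b \<in> carrier R" "c \<in> carrier R"
  shows "lam x (b \<oplus> c) = lam x b \<oplus> lam x c"
  using assms by (simp add: lam_def st_add asimp)

lemma st_zero_r[simp]: "x \<in> carrier R \<Longrightarrow> st x \<zero> = \<zero>"
  by (simp add: bstar_def asimp)

lemma st_zero_l[simp]: "x \<in> carrier R \<Longrightarrow> st \<zero> x = \<zero>"
  by (simp add: bstar_def asimp)

lemma st_neg: assumes "x \<in> carrier R" "b \<in> carrier R"
  shows "st x (\<ominus> b) = \<ominus> st x b"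
proof -
  have "st x b \<oplus> st x (\<ominus> b) = \<zero>"
    using st_add[OF assms(1,2) add.inv_closed[OF assms(2)]] assms by (simp add: r_neg)
  hence "st x (\<ominus> b) \<oplus> st x b = \<zero>" using assms by (simp add: a_comm)
  from add.inv_equality[OF this] show ?thesis using assms by simp
qed

lemma lam_one[simp]: "b \<in> carrier R \<Longrightarrow> lam \<one> b = b"
  by (simp add: lam_def zero_one[symmetric])

lemma lam_mult: assumes "x \<in> carrier R" "y \<in> carrier R" "b \<in> carrier R"
  shows "lam (x \<otimes> y) b = lam x (lam y b)"
proof -
  have "x \<otimes> y \<oplus> lam (x \<otimes> y) b = (x \<otimes> y) \<otimes> b" using assms by (intro lam_eq[symmetric]) auto
  also have "\<dots> = x \<otimes> (y \<otimes> b)" using assms by (rule_tac m_assoc)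
  also have "\<dots> = x \<oplus> lam x (y \<otimes> b)" using assms by (intro lam_eq) auto
  also have "\<dots> = x \<oplus> lam x (y \<oplus> lam y b)" using assms by (simp only: lam_eq[of y b])
  also have "\<dots> = x \<oplus> lam x y \<oplus> lam x (lam y b)" using assms by (simp only: lam_add lam_closed a_assoc)
  also have "\<dots> = x \<otimes> y \<oplus> lam x (lam y b)" using assms by (simp only: lam_eq[of x y])
  finally show ?thesis using assms by (meson add.l_cancel lam_closed m_closed)
qed

lemma lam_inv1[simp]: "x \<in> carrier R \<Longrightarrow> b \<in> carrier R \<Longrightarrow> lam (inv x) (lam x b) = b"
  by (simp flip: lam_mult)

lemma lam_inv2[simp]: "x \<in> carrier R \<Longrightarrow> b \<in> carrier R \<Longrightarrow> lam x (lam (inv x) b) = b"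
  by (simp flip: lam_mult)

lemma st_mult_l: assumes "x \<in> carrier R" "y \<in> carrier R" "c \<in> carrier R"
  shows "st (x \<otimes> y) c = st x (st y c) \<oplus> st x c \<oplus> st y c"
proof -
  have "st (x \<otimes> y) c \<oplus> c = lam (x \<otimes> y) c" by (simp add: lam_def)
  also have "\<dots> = lam x (st y c \<oplus> c)" using assms by (simp add: lam_mult lam_def[of y c])
  also have "\<dots> = (st x (st y c) \<oplus> st x c \<oplus> st y c) \<oplus> c" using assms
    by (simp add: lam_def st_add asimp)
  finally show ?thesis using assms by (simp add: add.r_cancel)
qed

lemma add_as_mult: "a \<in> carrier R \<Longrightarrow> b \<in> carrier R \<Longrightarrow> a \<oplus> b = a \<otimes> lam (inv a) b"
  by (simp add: lam_eq)

lemma sub_lam: assumes "x \<in> carrier R" "y \<in> carrier R"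
  shows "x \<ominus> y = lam y (inv y \<otimes> x)"
proof -
  have "x = y \<otimes> (inv y \<otimes> x)" using assms by (metis inv_closed m_assoc r_inv l_one)
  also have "\<dots> = y \<oplus> lam y (inv y \<otimes> x)" using assms by (simp add: lam_eq)
  finally have "x \<ominus> y = (y \<oplus> lam y (inv y \<otimes> x)) \<ominus> y" by simp
  thus ?thesis using assms by (simp add: asimp)
qed


section \<open>Ideals\<close>

lemma idl_sg: assumes "brace_ideal R L" shows "subgroup L (add_monoid R)" "subgroup L R"
  using assms unfolding brace_ideal_def subbrace_def by auto
lemma idl_sub: "brace_ideal R L \<Longrightarrow> L \<subseteq> carrier R"
  using subgroup.subset[OF idl_sg(2)] by simp
lemma idl_car: "brace_ideal R L \<Longrightarrow> x \<in> L \<Longrightarrow> x \<in> carrier R"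
  using idl_sub by blast
lemma idl_zero: "brace_ideal R L \<Longrightarrow> \<zero> \<in> L"
  using subgroup.one_closed[OF idl_sg(1)] by simp
lemma idl_add: "brace_ideal R L \<Longrightarrow> x \<in> L \<Longrightarrow> y \<in> L \<Longrightarrow> x \<oplus> y \<in> L"
  using subgroup.m_closed[OF idl_sg(1)] by simp
lemma idl_neg: "brace_ideal R L \<Longrightarrow> x \<in> L \<Longrightarrow> \<ominus> x \<in> L"
  using subgroup.m_inv_closed[OF idl_sg(1)] by (simp add: a_inv_def)
lemma idl_mult: "brace_ideal R L \<Longrightarrow> x \<in> L \<Longrightarrow> y \<in> L \<Longrightarrow> x \<otimes> y \<in> L"
  using subgroup.m_closed[OF idl_sg(2)] by simp
lemma idl_inv: "brace_ideal R L \<Longrightarrow> x \<in> L \<Longrightarrow> inv x \<in> L"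
  using subgroup.m_inv_closed[OF idl_sg(2)] by simp
lemma idl_stl: "brace_ideal R L \<Longrightarrow> a \<in> carrier R \<Longrightarrow> z \<in> L \<Longrightarrow> st a z \<in> L"
  unfolding brace_ideal_def by blast
lemma idl_str: "brace_ideal R L \<Longrightarrow> a \<in> carrier R \<Longrightarrow> z \<in> L \<Longrightarrow> st z a \<in> L"
  unfolding brace_ideal_def by blast
lemma idl_minus: "brace_ideal R L \<Longrightarrow> x \<in> L \<Longrightarrow> y \<in> L \<Longrightarrow> x \<ominus> y \<in> L"
  by (simp add: minus_eq idl_add idl_neg)

lemma idlI:
  assumes sub: "L \<subseteq> carrier R" and z: "\<zero> \<in> L"
    and add: "\<And>x y. x \<in> L \<Longrightarrow> y \<in> L \<Longrightarrow> x \<oplus> y \<in> L"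
    and neg: "\<And>x. x \<in> L \<Longrightarrow> \<ominus> x \<in> L"
    and mul: "\<And>x y. x \<in> L \<Longrightarrow> y \<in> L \<Longrightarrow> x \<otimes> y \<in> L"
    and inv: "\<And>x. x \<in> L \<Longrightarrow> inv x \<in> L"
    and stl: "\<And>a z. a \<in> carrier R \<Longrightarrow> z \<in> L \<Longrightarrow> st a z \<in> L"
    and str: "\<And>a z. a \<in> carrier R \<Longrightarrow> z \<in> L \<Longrightarrow> st z a \<in> L"
  shows "brace_ideal R L"
proof -
  have "subgroup L (add_monoid R)"
    apply (rule add.subgroupI)
    subgoal using sub by simp
    subgoal using z by blast
    subgoal using neg by simp
    subgoal using add by simp
    done
  moreover have "subgroup L R"
    apply (rule subgroupI)
    subgoal using sub by simp
    subgoal using z by blast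
    subgoal using inv by simp
    subgoal using mul by simp
    done
  ultimately show ?thesis unfolding brace_ideal_def subbrace_def using stl str by blast
qed

lemma idl_lam: "brace_ideal R L \<Longrightarrow> a \<in> carrier R \<Longrightarrow> z \<in> L \<Longrightarrow> lam a z \<in> L"
  by (simp add: lam_def idl_add idl_stl)

lemma idl_lam_rev: assumes "brace_ideal R L" "a \<in> carrier R" "z \<in> carrier R" "lam a z \<in> L"
  shows "z \<in> L"
  using idl_lam[OF assms(1) inv_closed[OF assms(2)] assms(4)] assms by simp

lemma idl_conj: assumes L: "brace_ideal R L" and g: "g \<in> carrier R" and z: "z \<in> L"
  shows "inv g \<otimes> z \<otimes> g \<in> L"
proof -
  have zc: "z \<in> carrier R" using idl_car[OF L z] .
  define w where "w = z \<oplus> st z g"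
  have w: "w \<in> L" unfolding w_def using L g z by (simp add: idl_add idl_str)
  have wc: "w \<in> carrier R" using idl_car[OF L w] .
  have yc: "inv g \<otimes> z \<otimes> g \<in> carrier R" using g zc by simp
  have "g \<oplus> lam g (inv g \<otimes> z \<otimes> g) = g \<otimes> (inv g \<otimes> z \<otimes> g)" using g zc by (intro lam_eq[symmetric]) auto
  also have "\<dots> = z \<otimes> g" using g zc by (simp add: m_assoc[symmetric] r_inv)
  also have "\<dots> = g \<oplus> w" using g zc unfolding w_def by (subst mult_eq) (simp_all add: a_ac)
  finally have "lam g (inv g \<otimes> z \<otimes> g) = w" using add.l_cancel[of g "lam g (inv g \<otimes> z \<otimes> g)" w] g wc yc by simp
  thus ?thesis using g yc w by (intro idl_lam_rev[OF L g yc]) simp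
qed

lemma cong_iff: assumes L: "brace_ideal R L" and x: "x \<in> carrier R" and y: "y \<in> carrier R"
  shows "x \<ominus> y \<in> L \<longleftrightarrow> inv y \<otimes> x \<in> L"
proof
  assume h: "x \<ominus> y \<in> L"
  have "lam y (inv y \<otimes> x) \<in> L" using h sub_lam[OF x y] by simp
  from idl_lam_rev[OF L y _ this] show "inv y \<otimes> x \<in> L" using x y by simp
next
  assume "inv y \<otimes> x \<in> L" thus "x \<ominus> y \<in> L" using sub_lam[OF x y] idl_lam[OF L y] x y by simp
qed



lemma sum_zero_neg: "p \<oplus> q = \<zero> \<Longrightarrow> p \<in> carrier R \<Longrightarrow> q \<in> carrier R \<Longrightarrow> p = \<ominus> q"
  using add.inv_equality[of p q] by simp

lemma canm[simp]: "y \<in> carrier R \<Longrightarrow> x \<in> carrier R \<Longrightarrow> y \<otimes> (inv y \<otimes> x) = x"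
  "y \<in> carrier R \<Longrightarrow> x \<in> carrier R \<Longrightarrow> inv y \<otimes> (y \<otimes> x) = x"
  by (simp_all add: m_assoc[symmetric])

lemma cong_mult: assumes L: "brace_ideal R L" and c: "x \<in> carrier R" "y \<in> carrier R" "x' \<in> carrier R" "y' \<in> carrier R"
  and h: "x \<ominus> y \<in> L" "x' \<ominus> y' \<in> L"
  shows "(x \<otimes> x') \<ominus> (y \<otimes> y') \<in> L"
proof -
  have u: "inv y \<otimes> x \<in> L" using h(1) cong_iff[OF L c(1,2)] by simp
  have u': "inv y' \<otimes> x' \<in> L" using h(2) cong_iff[OF L c(3,4)] by simp
  have "inv (y \<otimes> y') \<otimes> (x \<otimes> x') = (inv y' \<otimes> (inv y \<otimes> x) \<otimes> y') \<otimes> (inv y' \<otimes> x')"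
    using c by (simp add: m_assoc inv_mult_group)
  also have "\<dots> \<in> L" using idl_mult[OF L idl_conj[OF L c(4) u] u'] .
  finally show ?thesis using cong_iff[OF L] c by simp
qed

lemma cong_inv: assumes L: "brace_ideal R L" and c: "x \<in> carrier R" "y \<in> carrier R"
  and h: "x \<ominus> y \<in> L"
  shows "inv x \<ominus> inv y \<in> L"
proof -
  have u: "inv y \<otimes> x \<in> L" using h cong_iff[OF L c(1,2)] by simp
  have "inv (inv y \<otimes> x) \<in> L" using idl_inv[OF L u] .
  hence "inv x \<otimes> y \<in> L" using c by (simp add: inv_mult_group)
  hence "inv (inv x) \<otimes> (inv x \<otimes> y) \<otimes> inv x \<in> L" by (rule idl_conj[OF L inv_closed[OF c(1)]])
  hence "inv (inv y) \<otimes> inv x \<in> L" using c by (simp add: m_assoc)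
  thus ?thesis using cong_iff[OF L] c by simp
qed

lemma stA: assumes L: "brace_ideal R L" and u: "u \<in> L" and c: "v \<in> carrier R" "x \<in> carrier R"
  and h: "st v x \<in> L"
  shows "st (v \<oplus> u) x \<in> L"
proof -
  have uc: "u \<in> carrier R" using idl_car[OF L u] .
  define w where "w = lam (inv v) u"
  have w: "w \<in> L" unfolding w_def using idl_lam[OF L _ u] c by simp
  have wc: "w \<in> carrier R" using idl_car[OF L w] .
  have "v \<oplus> u = v \<otimes> w" unfolding w_def using add_as_mult[of v u] c uc by simp
  hence "st (v \<oplus> u) x = st v (st w x) \<oplus> st v x \<oplus> st w x" using st_mult_l c wc by simp
  also have "\<dots> \<in> L" using L w c h wc by (simp add: idl_add idl_stl idl_str)
  finally show ?thesis .
qed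

lemma stA': assumes L: "brace_ideal R L" and u: "u \<in> L" and c: "v \<in> carrier R" "x \<in> carrier R"
  and h: "st (v \<oplus> u) x \<in> L"
  shows "st v x \<in> L"
proof -
  have uc: "u \<in> carrier R" using idl_car[OF L u] .
  have "st ((v \<oplus> u) \<oplus> \<ominus> u) x \<in> L" using stA[OF L idl_neg[OF L u] _ c(2) h] c uc by simp
  thus ?thesis using c uc by (simp add: a_assoc r_neg)
qed

end

definition nextZ :: "('a, 'm) ring_scheme \<Rightarrow> 'a set \<Rightarrow> 'a set" where
  "nextZ R L = {a \<in> carrier R. \<forall>x\<in>carrier R. bstar R a x \<in> L \<and> bstar R x a \<in> L}"

fun Zs :: "('a, 'm) ring_scheme \<Rightarrow> nat \<Rightarrow> 'a set" where
  "Zs R 0 = {\<zero>\<^bsub>R\<^esub>}"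
| "Zs R (Suc n) = nextZ R (Zs R n)"

context brc
begin

lemma inv_zero[simp]: "inv \<zero> = \<zero>"
  by (simp add: zero_one)

lemma zero_ideal: "brace_ideal R {\<zero>}"
  by (rule idlI) auto

lemma next_sub: "brace_ideal R L \<Longrightarrow> L \<subseteq> nextZ R L"
  unfolding nextZ_def using idl_car idl_stl idl_str by blast

lemma next_ideal: assumes L: "brace_ideal R L" shows "brace_ideal R (nextZ R L)"
proof (rule idlI)
  let ?Z = "nextZ R L"
  have mem: "a \<in> ?Z \<longleftrightarrow> a \<in> carrier R \<and> (\<forall>x\<in>carrier R. st a x \<in> L \<and> st x a \<in> L)" for a
    unfolding nextZ_def by simp
  show "?Z \<subseteq> carrier R" unfolding nextZ_def by auto
  show "\<zero> \<in> ?Z" using mem idl_zero[OF L] by simp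
  show "a \<oplus> b \<in> ?Z" if a: "a \<in> ?Z" and b: "b \<in> ?Z" for a b
  proof -
    have ac: "a \<in> carrier R" and bc: "b \<in> carrier R" using a b mem by auto
    have "st x (a \<oplus> b) \<in> L" if x: "x \<in> carrier R" for x
      using st_add[OF x ac bc] idl_add[OF L] a b x mem by simp
    moreover have "st (a \<oplus> b) x \<in> L" if x: "x \<in> carrier R" for x
    proof -
      define c where "c = lam (inv a) b"
      have cc: "c \<in> carrier R" unfolding c_def using ac bc by simp
      have c_eq: "c = b \<oplus> st (inv a) b" unfolding c_def lam_def using ac bc by (simp add: a_comm)
      have "st (inv a) b \<in> L" using b mem ac by simp
      hence sc: "st c x \<in> L" unfolding c_eq using stA[OF L _ bc x] b mem x by simp
      have "a \<oplus> b = a \<otimes> c" unfolding c_def using add_as_mult[of a b] ac bc by simp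
      hence "st (a \<oplus> b) x = st a (st c x) \<oplus> st a x \<oplus> st c x" using st_mult_l ac cc x by simp
      also have "\<dots> \<in> L" using L sc a mem x ac cc by (simp add: idl_add idl_stl)
      finally show ?thesis .
    qed
    ultimately show ?thesis using ac bc mem by simp
  qed
  show "\<ominus> a \<in> ?Z" if a: "a \<in> ?Z" for a
  proof -
    have ac: "a \<in> carrier R" using a mem by auto
    have "st x (\<ominus> a) \<in> L" if x: "x \<in> carrier R" for x
      using st_neg[OF x ac] idl_neg[OF L] a x mem by simp
    moreover have "st (\<ominus> a) x \<in> L" if x: "x \<in> carrier R" for x
    proof -
      define c where "c = lam (inv a) (\<ominus> a)"
      have cc: "c \<in> carrier R" unfolding c_def using ac by simp
      have "a \<oplus> \<ominus> a = a \<otimes> c" unfolding c_def using ac by (intro add_as_mult) auto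
      hence "\<zero> = a \<otimes> c" using ac by (simp add: r_neg)
      hence "\<zero> = st (a \<otimes> c) x" using x by (metis st_zero_l)
      hence "\<zero> = st a (st c x) \<oplus> st a x \<oplus> st c x" using st_mult_l[OF ac cc x] by simp
      hence "lam a (st c x) \<oplus> st a x = \<zero>" using ac cc x by (simp add: lam_def a_ac)
      hence "lam a (st c x) = \<ominus> st a x" using ac cc x by (intro sum_zero_neg) auto
      also have "\<dots> \<in> L" using idl_neg[OF L] a mem x by simp
      finally have "lam a (st c x) \<in> L" .
      from idl_lam_rev[OF L ac _ this] have d: "st c x \<in> L" using cc x by simp
      have c_eq: "c = \<ominus> a \<oplus> st (inv a) (\<ominus> a)" unfolding c_def lam_def using ac by (simp add: a_comm)
      have u: "st (inv a) (\<ominus> a) \<in> L" using st_neg[of "inv a" a] ac idl_neg[OF L] a mem by simp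
      show ?thesis using stA'[OF L u _ x] d c_eq ac by simp
    qed
    ultimately show ?thesis using ac mem by simp
  qed
  show "a \<otimes> b \<in> ?Z" if a: "a \<in> ?Z" and b: "b \<in> ?Z" for a b
  proof -
    have ac: "a \<in> carrier R" and bc: "b \<in> carrier R" using a b mem by auto
    have "st (a \<otimes> b) x \<in> L" if x: "x \<in> carrier R" for x
      using st_mult_l[OF ac bc x] L a b mem x by (simp add: idl_add idl_stl)
    moreover have "st x (a \<otimes> b) \<in> L" if x: "x \<in> carrier R" for x
    proof -
      have "st x (a \<otimes> b) = st x a \<oplus> st x (st a b) \<oplus> st x b"
        using mult_eq[OF ac bc] x ac bc by (simp add: st_add)
      also have "\<dots> \<in> L" using L a b mem x ac bc by (simp add: idl_add idl_stl)
      finally show ?thesis .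
    qed
    ultimately show ?thesis using ac bc mem by simp
  qed
  show "inv a \<in> ?Z" if a: "a \<in> ?Z" for a
  proof -
    have ac: "a \<in> carrier R" using a mem by auto
    have "st (inv a) x \<in> L" if x: "x \<in> carrier R" for x
    proof -
      have "\<zero> = st (inv a \<otimes> a) x" using ac x by (simp add: zero_one[symmetric])
      also have "\<dots> = st (inv a) (st a x) \<oplus> st (inv a) x \<oplus> st a x" by (rule st_mult_l) (use ac x in auto)
      finally have e: "\<zero> = st (inv a) (st a x) \<oplus> st (inv a) x \<oplus> st a x" .
      have "st (inv a) x \<oplus> (st (inv a) (st a x) \<oplus> st a x) = \<zero>" using ac x e[symmetric] by (simp add: a_ac)
      hence "st (inv a) x = \<ominus> (st (inv a) (st a x) \<oplus> st a x)" using ac x by (intro sum_zero_neg) auto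
      also have "\<dots> \<in> L" using L a mem x ac by (simp add: idl_add idl_stl idl_neg)
      finally show ?thesis .
    qed
    moreover have "st x (inv a) \<in> L" if x: "x \<in> carrier R" for x
    proof -
      have "\<zero> = a \<otimes> inv a" using ac by (simp add: zero_one)
      also have "\<dots> = a \<oplus> st a (inv a) \<oplus> inv a" using mult_eq ac by simp
      finally have "inv a \<oplus> (a \<oplus> st a (inv a)) = \<zero>" using ac by (simp add: a_ac)
      hence ia: "inv a = \<ominus> (a \<oplus> st a (inv a))" using ac by (intro sum_zero_neg) auto
      have "st x (inv a) = st x (\<ominus> (a \<oplus> st a (inv a)))" using ia by (rule arg_cong)
      also have "\<dots> = \<ominus> (st x a \<oplus> st x (st a (inv a)))" using x ac by (simp add: st_neg st_add)
      also have "\<dots> \<in> L" using L a mem x ac by (simp add: idl_add idl_stl idl_neg)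
      finally show ?thesis .
    qed
    ultimately show ?thesis using ac mem by simp
  qed
  show "st a z \<in> ?Z" if "a \<in> carrier R" "z \<in> ?Z" for a z
    using next_sub[OF L] that mem by auto
  show "st z a \<in> ?Z" if "a \<in> carrier R" "z \<in> ?Z" for a z
    using next_sub[OF L] that mem by auto
qed

lemma Zs_ideal: "brace_ideal R (Zs R n)"
  by (induction n) (simp_all add: zero_ideal next_ideal)

lemma Zs_mono: "Zs R n \<subseteq> Zs R (Suc n)"
  using next_sub[OF Zs_ideal] by simp


section \<open>Quotients\<close>

lemma neg_zero[simp]: "\<ominus> \<zero> = \<zero>"
  using sum_zero_neg[of "\<zero>" "\<zero>"] by simp

context
  fixes L assumes L: "brace_ideal R L"
begin

abbreviation "bc \<equiv> bcoset R L"
abbreviation "Q \<equiv> quotient_brace R L"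

lemma bc_self: "a \<in> carrier R \<Longrightarrow> a \<in> bc a"
  unfolding bcoset_def using idl_zero[OF L] by (auto intro!: exI[of _ \<zero>])

lemma bc_eq: assumes a: "a \<in> carrier R" and b: "b \<in> carrier R"
  shows "bc a = bc b \<longleftrightarrow> a \<ominus> b \<in> L"
proof
  assume "bc a = bc b"
  hence "a \<in> bc b" using bc_self[OF a] by simp
  then obtain z where z: "z \<in> L" "a = b \<oplus> z" unfolding bcoset_def by auto
  have "a \<ominus> b = z" using z b idl_car[OF L z(1)] by (simp add: asimp)
  thus "a \<ominus> b \<in> L" using z by simp
next
  assume h: "a \<ominus> b \<in> L"
  have hc: "a \<ominus> b \<in> carrier R" using a b by simp
  show "bc a = bc b"
  proof (intro equalityI subsetI)
    fix x assume "x \<in> bc a"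
    then obtain z where z: "z \<in> L" "x = a \<oplus> z" unfolding bcoset_def by auto
    have zc: "z \<in> carrier R" using idl_car[OF L z(1)] .
    have "x = b \<oplus> ((a \<ominus> b) \<oplus> z)" using z a b zc by (simp add: asimp)
    moreover have "(a \<ominus> b) \<oplus> z \<in> L" using idl_add[OF L h z(1)] .
    ultimately show "x \<in> bc b" unfolding bcoset_def by auto
  next
    fix x assume "x \<in> bc b"
    then obtain z where z: "z \<in> L" "x = b \<oplus> z" unfolding bcoset_def by auto
    have zc: "z \<in> carrier R" using idl_car[OF L z(1)] .
    have "x = a \<oplus> (\<ominus> (a \<ominus> b) \<oplus> z)" using z a b zc by (simp add: asimp)
    moreover have "\<ominus> (a \<ominus> b) \<oplus> z \<in> L" using idl_add[OF L idl_neg[OF L h] z(1)] .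
    ultimately show "x \<in> bc a" unfolding bcoset_def by auto
  qed
qed

lemma brep_prop: assumes a: "a \<in> carrier R"
  shows "brep (bc a) \<in> carrier R" "brep (bc a) \<ominus> a \<in> L"
proof -
  have "brep (bc a) \<in> bc a" unfolding brep_def using bc_self[OF a] by (rule someI)
  then obtain z where z: "z \<in> L" "brep (bc a) = a \<oplus> z" unfolding bcoset_def by auto
  have zc: "z \<in> carrier R" using idl_car[OF L z(1)] .
  show "brep (bc a) \<in> carrier R" using z a zc by simp
  have "brep (bc a) \<ominus> a = z" using z a zc by (simp add: asimp)
  thus "brep (bc a) \<ominus> a \<in> L" using z by simp
qed

lemma Q_carrier: "carrier Q = bc ` carrier R"
  by (simp add: quotient_brace_def)
lemma Q_zero: "ring.zero Q = bc \<zero>"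
  by (simp add: quotient_brace_def)

lemma Q_add: assumes a: "a \<in> carrier R" and b: "b \<in> carrier R"
  shows "ring.add Q (bc a) (bc b) = bc (a \<oplus> b)"
proof -
  have "ring.add Q (bc a) (bc b) = bc (brep (bc a) \<oplus> brep (bc b))" by (simp add: quotient_brace_def)
  also have "\<dots> = bc (a \<oplus> b)"
  proof (subst bc_eq)
    show "brep (bc a) \<oplus> brep (bc b) \<in> carrier R" using brep_prop a b by simp
    show "a \<oplus> b \<in> carrier R" using a b by simp
    have "brep (bc a) \<oplus> brep (bc b) \<ominus> (a \<oplus> b) = (brep (bc a) \<ominus> a) \<oplus> (brep (bc b) \<ominus> b)"
      using brep_prop a b by (simp add: asimp)
    thus "brep (bc a) \<oplus> brep (bc b) \<ominus> (a \<oplus> b) \<in> L" using idl_add[OF L brep_prop(2)[OF a] brep_prop(2)[OF b]] by simp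
  qed
  finally show ?thesis .
qed

lemma Q_mult: assumes a: "a \<in> carrier R" and b: "b \<in> carrier R"
  shows "monoid.mult Q (bc a) (bc b) = bc (a \<otimes> b)"
proof -
  have "monoid.mult Q (bc a) (bc b) = bc (brep (bc a) \<otimes> brep (bc b))" by (simp add: quotient_brace_def)
  also have "\<dots> = bc (a \<otimes> b)"
    using bc_eq brep_prop a b cong_mult[OF L] by simp
  finally show ?thesis .
qed

lemma Q_neg: assumes a: "a \<in> carrier R"
  shows "a_inv Q (bc a) = bc (\<ominus> a)"
proof -
  have "m_inv (add_monoid Q) (bc a) = bc (\<ominus> a)"
    unfolding m_inv_def
  proof (rule the_equality)
    show "bc (\<ominus> a) \<in> carrier (add_monoid Q) \<and> bc a \<otimes>\<^bsub>add_monoid Q\<^esub> bc (\<ominus> a) = \<one>\<^bsub>add_monoid Q\<^esub>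
        \<and> bc (\<ominus> a) \<otimes>\<^bsub>add_monoid Q\<^esub> bc a = \<one>\<^bsub>add_monoid Q\<^esub>"
      using a Q_add Q_zero Q_carrier by (simp add: r_neg l_neg)
    fix y assume "y \<in> carrier (add_monoid Q) \<and> bc a \<otimes>\<^bsub>add_monoid Q\<^esub> y = \<one>\<^bsub>add_monoid Q\<^esub>
        \<and> y \<otimes>\<^bsub>add_monoid Q\<^esub> bc a = \<one>\<^bsub>add_monoid Q\<^esub>"
    hence y: "y \<in> carrier Q" "ring.add Q y (bc a) = ring.zero Q" by auto
    then obtain b where b: "b \<in> carrier R" "y = bc b" using Q_carrier by auto
    have "bc (b \<oplus> a) = bc \<zero>" using y b a Q_add Q_zero by simp
    hence "b \<oplus> a \<ominus> \<zero> \<in> L" using bc_eq a b by simp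
    hence "b \<ominus> \<ominus> a \<in> L" using a b by (simp add: asimp)
    thus "y = bc (\<ominus> a)" using b a bc_eq by simp
  qed
  thus ?thesis by (simp add: a_inv_def)
qed

lemma Q_star: assumes a: "a \<in> carrier R" and x: "x \<in> carrier R"
  shows "bstar Q (bc a) (bc x) = bc (st a x)"
  using a x by (simp add: bstar_def a_minus_def Q_add Q_mult Q_neg)

lemma Q_center: assumes a: "a \<in> carrier R"
  shows "bc a \<in> star_center Q \<longleftrightarrow> (\<forall>x\<in>carrier R. st a x \<in> L \<and> st x a \<in> L)"
proof -
  have e: "bc (st u v) = ring.zero Q \<longleftrightarrow> st u v \<in> L" if "u \<in> carrier R" "v \<in> carrier R" for u v
    using that bc_eq Q_zero by (simp add: asimp)
  show ?thesis unfolding star_center_def using a Q_carrier Q_star e by auto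
qed

end

lemma star_zeta_Zs: "star_zeta R n = Zs R n"
proof (induction n)
  case 0 then show ?case by simp
next
  case (Suc n)
  show ?case using Q_center[OF Zs_ideal[of n]] Suc by (auto simp: nextZ_def)
qed


section \<open>Cyclic part\<close>

abbreviation pw :: "int \<Rightarrow> 'a \<Rightarrow> 'a" where "pw k b \<equiv> add_pow R k b"

lemma pw_0[simp]: "pw 0 b = \<zero>"
  by (simp add: add_pow_def)
lemma pw_int: "pw (int n) b = add_pow R n b"
  by (simp add: add_pow_def int_pow_int)
lemma pw_1[simp]: "b \<in> carrier R \<Longrightarrow> pw 1 b = b"
  using add.int_pow_1 by simp
lemma pw_Suc: "b \<in> carrier R \<Longrightarrow> pw (int (Suc n)) b = pw (int n) b \<oplus> b"
proof -
  assume b: "b \<in> carrier R"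
  have "int (Suc n) = int n + 1" by simp
  hence "pw (int (Suc n)) b = pw (int n + 1) b" by (rule arg_cong)
  also have "\<dots> = pw (int n) b \<oplus> pw 1 b" using add.int_pow_mult[OF b] by blast
  finally show ?thesis using b by simp
qed

lemma int_neg_cases: "\<not> (k::int) \<ge> 0 \<Longrightarrow> \<exists>n. k = - int n"
  by (intro exI[of _ "nat (- k)"]) simp
lemma int_pos_cases: "(k::int) \<ge> 0 \<Longrightarrow> \<exists>n. k = int n"
  by (intro exI[of _ "nat k"]) simp

lemma add_hom_int:
  assumes hadd: "\<And>k l. f (k + l) = f k \<oplus> f l" and car: "\<And>k. f k \<in> carrier R"
  shows "f k = pw k (f 1)"
proof -
  have f0: "f 0 = \<zero>"
  proof -
    have "f 0 \<oplus> f 0 = f 0 \<oplus> \<zero>" using hadd[of 0 0] car[of 0] by simp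
    thus ?thesis using add.l_cancel[of "f 0" "f 0" \<zero>] car[of 0] by simp
  qed
  have pos: "f (int n) = pw (int n) (f 1)" for n
  proof (induction n)
    case 0 then show ?case using f0 by simp
  next
    case (Suc n)
    have "int (Suc n) = int n + 1" by simp
    hence "f (int (Suc n)) = f (int n + 1)" by (rule arg_cong)
    also have "\<dots> = f (int n) \<oplus> f 1" by (rule hadd)
    also have "\<dots> = pw (int n) (f 1) \<oplus> f 1" using Suc by simp
    also have "\<dots> = pw (int (Suc n)) (f 1)" using pw_Suc car[of 1] by simp
    finally show ?case .
  qed
  show ?thesis
  proof (cases "k \<ge> 0")
    case True
    then obtain n where "k = int n" using int_pos_cases by blast
    thus ?thesis using pos by simp
  next
    case False
    then obtain n where n: "k = - int n" using int_neg_cases by blast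
    have "f (- int n) \<oplus> f (int n) = \<zero>" using hadd[of "- int n" "int n"] f0 by simp
    hence "f (- int n) = \<ominus> f (int n)" using car by (intro sum_zero_neg) auto
    also have "\<dots> = pw (- int n) (f 1)" using pos[of n] car[of 1] add.int_pow_neg[of "f 1" "int n"] by simp
    finally show ?thesis using n by simp
  qed
qed

lemma st_pow_r: assumes x: "x \<in> carrier R" and b: "b \<in> carrier R"
  shows "st x (pw k b) = pw k (st x b)"
proof -
  have "(\<lambda>k. st x (pw k b)) k = pw k ((\<lambda>k. st x (pw k b)) 1)"
    by (rule add_hom_int) (use x b in \<open>simp_all add: add.int_pow_mult st_add\<close>)
  thus ?thesis using b by simp
qed

lemma st_pow_nat: assumes b: "b \<in> carrier R" and bb: "st b b = \<zero>"
  shows "st (pw (int n) b) b = \<zero>"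
proof (induction n)
  case 0 then show ?case using b by simp
next
  case (Suc n)
  have pc: "pw (int n) b \<in> carrier R" using b by simp
  have "pw (int (Suc n)) b = pw (int n) b \<oplus> b" using pw_Suc b by simp
  also have "\<dots> = pw (int n) b \<otimes> b" using mult_eq[OF pc b] Suc b by simp
  finally have e: "pw (int (Suc n)) b = pw (int n) b \<otimes> b" .
  show ?case unfolding e using st_mult_l[OF pc b b] bb Suc pc b by simp
qed

context
  fixes a assumes a: "a \<in> carrier R" and aa: "st a a = \<zero>"
begin

lemma neg_a_inv: "inv a = \<ominus> a"
proof -
  have "a \<otimes> \<ominus> a = a \<oplus> st a (\<ominus> a) \<oplus> \<ominus> a" using mult_eq a by simp
  also have "\<dots> = \<zero>" using st_neg[OF a a] aa a by (simp add: asimp)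
  finally have "a \<otimes> \<ominus> a = \<one>" by (simp add: zero_one)
  hence "inv (\<ominus> a) = a" using inv_equality[of a "\<ominus> a"] a by simp
  thus ?thesis using a by (metis add.inv_closed inv_inv)
qed

lemma st_nega: "st (\<ominus> a) a = \<zero>"
proof -
  have "\<zero> = st \<zero> a" using a by simp
  also have "\<dots> = st (inv a \<otimes> a) a" using a by (simp add: zero_one)
  also have "\<dots> = st (inv a) (st a a) \<oplus> st (inv a) a \<oplus> st a a" by (rule st_mult_l) (use a in auto)
  also have "\<dots> = st (inv a) a" using aa a by simp
  finally show ?thesis using neg_a_inv by simp
qed

lemma st_pow_a: "st (pw k a) a = \<zero>"
proof (cases "k \<ge> 0")
  case True
  then obtain n where "k = int n" using int_pos_cases by blast
  thus ?thesis using st_pow_nat[OF a aa] by simp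
next
  case False
  then obtain n where n: "k = - int n" using int_neg_cases by blast
  have na: "\<ominus> a \<in> carrier R" using a by simp
  have "st (\<ominus> a) (\<ominus> a) = \<zero>" using st_neg[OF na a] st_nega by simp
  hence "st (pw (int n) (\<ominus> a)) (\<ominus> a) = \<zero>" using st_pow_nat[OF na] by simp
  hence "\<ominus> st (pw (int n) (\<ominus> a)) a = \<zero>" using st_neg[of _ a] a na by simp
  hence "st (pw (int n) (\<ominus> a)) a = \<zero>" using a na
    by (metis add.int_pow_closed st_closed minus_minus neg_zero)
  moreover have "pw (int n) (\<ominus> a) = pw k a" using n a add.int_pow_inv[of a "int n"] add.int_pow_neg[of a "int n"] by simp
  ultimately show ?thesis by simp
qed

definition "C = range (\<lambda>k. pw k a)"

lemma C_car: "c \<in> C \<Longrightarrow> c \<in> carrier R"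
  unfolding C_def using a by auto

lemma C_triv: "c \<in> C \<Longrightarrow> d \<in> C \<Longrightarrow> st c d = \<zero>"
  unfolding C_def using st_pow_r st_pow_a a by auto

lemma C_add: "c \<in> C \<Longrightarrow> d \<in> C \<Longrightarrow> c \<oplus> d \<in> C"
  unfolding C_def using a by (auto simp: add.int_pow_mult[symmetric])

lemma C_neg: "c \<in> C \<Longrightarrow> \<ominus> c \<in> C"
  unfolding C_def using a by (auto simp: add.int_pow_neg[symmetric])

lemma C_zero: "\<zero> \<in> C"
  unfolding C_def using pw_0[of a] by (metis rangeI)

lemma C_a: "a \<in> C"
  unfolding C_def using pw_1[OF a] by (metis rangeI)

lemma C_mult: "c \<in> C \<Longrightarrow> d \<in> C \<Longrightarrow> c \<otimes> d = c \<oplus> d"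
  using mult_eq C_triv C_car by simp

lemma C_inv: assumes c: "c \<in> C" shows "inv c = \<ominus> c"
proof -
  have "\<ominus> c \<otimes> c = \<one>" using C_mult[OF C_neg[OF c] c] C_car[OF c] by (simp add: l_neg zero_one)
  thus ?thesis using inv_equality C_car c by simp
qed

lemma C_in_ideal: "brace_ideal R L \<Longrightarrow> a \<in> L \<Longrightarrow> C \<subseteq> L"
  unfolding C_def using add.subgroup_int_pow_closed[OF idl_sg(1)] by auto


lemma C_in_Zs: "a \<in> Zs R n \<Longrightarrow> C \<subseteq> Zs R n"
  using C_in_ideal[OF Zs_ideal] by blast

definition "J i = {x \<in> carrier R. \<exists>c\<in>C. x \<ominus> c \<in> Zs R i}"

lemma J_mem: "x \<in> J i \<longleftrightarrow> x \<in> carrier R \<and> (\<exists>c\<in>C. x \<ominus> c \<in> Zs R i)"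
  unfolding J_def by simp

lemma J_car: "x \<in> J i \<Longrightarrow> x \<in> carrier R"
  unfolding J_def by auto

lemma Zs_sub_J: "Zs R i \<subseteq> J i"
proof
  fix x assume x: "x \<in> Zs R i"
  have xc: "x \<in> carrier R" using idl_car[OF Zs_ideal x] .
  have "x \<ominus> \<zero> \<in> Zs R i" using x xc by (simp add: asimp)
  thus "x \<in> J i" unfolding J_def using xc C_zero by blast
qed

lemma C_sub_J: "C \<subseteq> J i"
proof
  fix c assume c: "c \<in> C"
  have "c \<ominus> c \<in> Zs R i" using C_car[OF c] idl_zero[OF Zs_ideal] by (simp add: minus_eq r_neg)
  thus "c \<in> J i" unfolding J_def using c C_car by blast
qed

lemma J_mono: "J i \<subseteq> J (Suc i)"
  unfolding J_def using Zs_mono by blast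

lemma J_sg: "subgroup (J i) (add_monoid R)" "subgroup (J i) R"
proof -
  let ?L = "Zs R i"
  have L: "brace_ideal R ?L" by (rule Zs_ideal)
  have sub: "J i \<subseteq> carrier R" unfolding J_def by auto
  have ne: "J i \<noteq> {}" using C_sub_J C_zero by blast
  have add: "x \<oplus> y \<in> J i" if xJ: "x \<in> J i" and yJ: "y \<in> J i" for x y
  proof -
    obtain c where c: "c \<in> C" "x \<ominus> c \<in> ?L" using xJ J_mem by blast
    obtain d where d: "d \<in> C" "y \<ominus> d \<in> ?L" using yJ J_mem by blast
    have xy: "x \<in> carrier R" "y \<in> carrier R" using xJ yJ J_car by auto
    have cc: "c \<in> carrier R" "d \<in> carrier R" using C_car c d by auto
    have "(x \<oplus> y) \<ominus> (c \<oplus> d) = (x \<ominus> c) \<oplus> (y \<ominus> d)" using xy cc by (simp add: asimp)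
    hence "(x \<oplus> y) \<ominus> (c \<oplus> d) \<in> ?L" using idl_add[OF L c(2) d(2)] by simp
    thus ?thesis unfolding J_def using C_add[OF c(1) d(1)] xy by blast
  qed
  have neg: "\<ominus> x \<in> J i" if xJ: "x \<in> J i" for x
  proof -
    obtain c where c: "c \<in> C" "x \<ominus> c \<in> ?L" using xJ J_mem by blast
    have xc: "x \<in> carrier R" using xJ J_car by auto
    have cc: "c \<in> carrier R" using C_car c by auto
    have "\<ominus> x \<ominus> \<ominus> c = \<ominus> (x \<ominus> c)" using xc cc by (simp add: asimp)
    hence "\<ominus> x \<ominus> \<ominus> c \<in> ?L" using idl_neg[OF L c(2)] by simp
    thus ?thesis unfolding J_def using C_neg[OF c(1)] xc by blast
  qed
  have mul: "x \<otimes> y \<in> J i" if xJ: "x \<in> J i" and yJ: "y \<in> J i" for x y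
  proof -
    obtain c where c: "c \<in> C" "x \<ominus> c \<in> ?L" using xJ J_mem by blast
    obtain d where d: "d \<in> C" "y \<ominus> d \<in> ?L" using yJ J_mem by blast
    have xy: "x \<in> carrier R" "y \<in> carrier R" using xJ yJ J_car by auto
    have cc: "c \<in> carrier R" "d \<in> carrier R" using C_car c d by auto
    have "(x \<otimes> y) \<ominus> (c \<otimes> d) \<in> ?L" using cong_mult[OF L xy(1) cc(1) xy(2) cc(2) c(2) d(2)] .
    moreover have "c \<otimes> d \<in> C" using C_mult[OF c(1) d(1)] C_add[OF c(1) d(1)] by simp
    ultimately show ?thesis unfolding J_def using xy by blast
  qed
  have inv: "inv x \<in> J i" if xJ: "x \<in> J i" for x
  proof -
    obtain c where c: "c \<in> C" "x \<ominus> c \<in> ?L" using xJ J_mem by blast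
    have xc: "x \<in> carrier R" using xJ J_car by auto
    have cc: "c \<in> carrier R" using C_car c by auto
    have "inv x \<ominus> inv c \<in> ?L" using cong_inv[OF L xc cc c(2)] .
    moreover have "inv c \<in> C" using C_inv[OF c(1)] C_neg[OF c(1)] by simp
    ultimately show ?thesis unfolding J_def using xc by blast
  qed
  show "subgroup (J i) (add_monoid R)"
    apply (rule add.subgroupI)
    subgoal using sub by simp
    subgoal using ne by blast
    subgoal using neg by simp
    subgoal using add by simp
    done
  show "subgroup (J i) R"
    apply (rule subgroupI)
    subgoal using sub by simp
    subgoal using ne by blast
    subgoal using inv by simp
    subgoal using mul by simp
    done
qed

lemma J_top: assumes aZ: "a \<in> Zs R (Suc m)" shows "brace_ideal R (J m)"
proof -
  have JZ: "J m \<subseteq> Zs R (Suc m)"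
  proof
    fix x assume "x \<in> J m"
    then obtain c where c: "c \<in> C" "x \<ominus> c \<in> Zs R m" and xc: "x \<in> carrier R" unfolding J_def by auto
    have cc: "c \<in> carrier R" using C_car c by auto
    have "c \<in> Zs R (Suc m)" using C_in_Zs[OF aZ] c by blast
    moreover have "x \<ominus> c \<in> Zs R (Suc m)" using Zs_mono c by blast
    ultimately have "c \<oplus> (x \<ominus> c) \<in> Zs R (Suc m)" using idl_add[OF Zs_ideal] by blast
    thus "x \<in> Zs R (Suc m)" using xc cc by (simp add: asimp)
  qed
  have "brace_ideal R (J m) = (subbrace R (J m) \<and> (\<forall>x\<in>carrier R. \<forall>z\<in>J m. st x z \<in> J m \<and> st z x \<in> J m))"
    unfolding brace_ideal_def ..
  moreover have "subbrace R (J m)" unfolding subbrace_def using J_sg by blast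
  moreover have "st x z \<in> J m \<and> st z x \<in> J m" if "x \<in> carrier R" "z \<in> J m" for x z
  proof -
    have "z \<in> nextZ R (Zs R m)" using JZ that by auto
    hence "st x z \<in> Zs R m \<and> st z x \<in> Zs R m" using that unfolding nextZ_def by auto
    thus ?thesis using Zs_sub_J by blast
  qed
  ultimately show ?thesis by blast
qed

lemma restr_inv: assumes "subgroup H (add_monoid R)" "x \<in> H"
  shows "a_inv (R\<lparr>carrier := H\<rparr>) x = \<ominus> x"
proof -
  have e: "add_monoid (R\<lparr>carrier := H\<rparr>) = (add_monoid R)\<lparr>carrier := H\<rparr>" by simp
  show ?thesis unfolding a_inv_def e using add.m_inv_consistent[OF assms] by (simp add: a_inv_def)
qed

lemma restr_star: assumes "subgroup H (add_monoid R)" "x \<in> H" "y \<in> H"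
  shows "bstar (R\<lparr>carrier := H\<rparr>) x y = st x y"
  using assms restr_inv by (simp add: bstar_def a_minus_def)

lemma J_step: "brace_ideal (R\<lparr>carrier := J (Suc i)\<rparr>) (J i)"
proof -
  let ?RJ = "R\<lparr>carrier := J (Suc i)\<rparr>"
  have e: "add_monoid ?RJ = (add_monoid R)\<lparr>carrier := J (Suc i)\<rparr>" by simp
  have s1: "subgroup (J i) (add_monoid ?RJ)"
    unfolding e by (rule add.subgroup_incl[OF J_sg(1) J_sg(1) J_mono])
  have s2: "subgroup (J i) ?RJ"
    by (rule subgroup_incl[OF J_sg(2) J_sg(2) J_mono])
  have key: "st y z \<in> Zs R i \<and> st z y \<in> Zs R i" if y: "y \<in> J (Suc i)" and z: "z \<in> J i" for y z
  proof -
    have L: "brace_ideal R (Zs R i)" by (rule Zs_ideal)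
    have L1: "brace_ideal R (Zs R (Suc i))" by (rule Zs_ideal)
    obtain c where c: "c \<in> C" "y \<ominus> c \<in> Zs R (Suc i)" and yc: "y \<in> carrier R" using y unfolding J_def by auto
    obtain d where d: "d \<in> C" "z \<ominus> d \<in> Zs R i" and zc: "z \<in> carrier R" using z unfolding J_def by auto
    have cc: "c \<in> carrier R" "d \<in> carrier R" using C_car c d by auto
    define z0 where "z0 = y \<ominus> c"
    define w where "w = z \<ominus> d"
    have z0: "z0 \<in> nextZ R (Zs R i)" using c(2) unfolding z0_def by simp
    have z0c: "z0 \<in> carrier R" unfolding z0_def using yc cc by simp
    have w: "w \<in> Zs R i" using d(2) unfolding w_def .
    have wc: "w \<in> carrier R" unfolding w_def using zc cc by simp
    have ye: "y = c \<oplus> z0" unfolding z0_def using yc cc by (simp add: asimp)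
    have ze: "z = d \<oplus> w" unfolding w_def using zc cc by (simp add: asimp)
    define z1 where "z1 = lam (inv c) z0"
    have z1: "z1 \<in> nextZ R (Zs R i)" unfolding z1_def using idl_lam[OF L1 _ ] z0 cc by simp
    have z1c: "z1 \<in> carrier R" unfolding z1_def using z0c cc by simp
    have ye2: "y = c \<otimes> z1" unfolding ye z1_def using add_as_mult[of c z0] cc z0c by simp
    define w1 where "w1 = lam (inv d) w"
    have w1: "w1 \<in> Zs R i" unfolding w1_def using idl_lam[OF L _ w] cc by simp
    have w1c: "w1 \<in> carrier R" unfolding w1_def using wc cc by simp
    have ze2: "z = d \<otimes> w1" unfolding ze w1_def using add_as_mult[of d w] cc wc by simp
    have A: "st y z \<in> Zs R i"
    proof -
      have "st y z = st y d \<oplus> st y w" unfolding ze using st_add yc cc wc by simp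
      moreover have "st y d = st c (st z1 d) \<oplus> st c d \<oplus> st z1 d"
        unfolding ye2 using st_mult_l cc z1c by simp
      moreover have "st z1 d \<in> Zs R i" using z1 cc unfolding nextZ_def by auto
      moreover have "st c d = \<zero>" using C_triv c(1) d(1) by simp
      ultimately show ?thesis using L w yc cc z1c by (simp add: idl_add idl_stl)
    qed
    have B: "st z y \<in> Zs R i"
    proof -
      have "st z y = st d (st w1 y) \<oplus> st d y \<oplus> st w1 y"
        unfolding ze2 using st_mult_l cc w1c yc by simp
      moreover have "st d y = st d c \<oplus> st d z0" unfolding ye using st_add cc z0c by simp
      moreover have "st d z0 \<in> Zs R i" using z0 cc unfolding nextZ_def by auto
      moreover have "st d c = \<zero>" using C_triv c(1) d(1) by simp
      ultimately show ?thesis using L w1 yc cc z0c by (simp add: idl_add idl_stl idl_str)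
    qed
    show ?thesis using A B by blast
  qed
  show ?thesis unfolding brace_ideal_def subbrace_def
  proof (intro conjI ballI)
    show "subgroup (J i) (add_monoid ?RJ)" by (rule s1)
    show "subgroup (J i) ?RJ" by (rule s2)
    fix y z assume y: "y \<in> carrier ?RJ" and z: "z \<in> J i"
    have y': "y \<in> J (Suc i)" using y by simp
    have z': "z \<in> J (Suc i)" using z J_mono by blast
    show "bstar ?RJ y z \<in> J i" using restr_star[OF J_sg(1) y' z'] key[OF y' z] Zs_sub_J by auto
    show "bstar ?RJ z y \<in> J i" using restr_star[OF J_sg(1) z' y'] key[OF y' z] Zs_sub_J by auto
  qed
qed

lemma J0: "J 0 = C"
proof
  show "J 0 \<subseteq> C"
  proof
    fix x assume "x \<in> J 0"
    then obtain c where c: "c \<in> C" "x \<ominus> c = \<zero>" and xc: "x \<in> carrier R" unfolding J_def by auto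
    have "x = (x \<ominus> c) \<oplus> c" using xc C_car[OF c(1)] by (simp add: asimp)
    hence "x = c" using c(2) C_car[OF c(1)] by simp
    thus "x \<in> C" using c by simp
  qed
  show "C \<subseteq> J 0" by (rule C_sub_J)
qed

lemma C_ideal:
  assumes T: "\<forall>I J. brace_ideal R J \<and> brace_ideal (R\<lparr>carrier := J\<rparr>) I \<longrightarrow> brace_ideal R I"
    and aZ: "a \<in> Zs R (Suc m)"
  shows "brace_ideal R C"
proof -
  have "brace_ideal R (J (m - j))" if "j \<le> m" for j
    using that
  proof (induction j)
    case 0 then show ?case using J_top[OF aZ] by simp
  next
    case (Suc j)
    hence h: "brace_ideal R (J (Suc (m - Suc j)))" using Suc_diff_Suc[of j m] by simp
    show ?case using T[rule_format, OF conjI[OF h J_step[of "m - Suc j"]]] by simp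
  qed
  from this[of m] show ?thesis using J0 by simp
qed

end


lemma pw_ne0: assumes a: "a \<in> carrier R" and oa: "group.ord (add_monoid R) a = 0" and t: "t \<noteq> 0"
  shows "pw t a \<noteq> \<zero>"
  using add.int_pow_eq_id[OF a, of t] oa t by simp

lemma ord_pw: assumes a: "a \<in> carrier R" and oa: "group.ord (add_monoid R) a = 0" and t: "t \<noteq> 0"
  shows "group.ord (add_monoid R) (pw t a) = 0"
proof -
  have pc: "pw t a \<in> carrier R" using a by simp
  have "add_pow R n (pw t a) \<noteq> \<zero>" if "n \<noteq> 0" for n :: nat
  proof -
    have "add_pow R n (pw t a) = pw (int n) (pw t a)" by (simp add: pw_int)
    also have "\<dots> = pw (t * int n) a" using add.int_pow_pow[OF a] by simp
    finally show ?thesis using pw_ne0[OF a oa] that t by simp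
  qed
  thus ?thesis using add.ord_eq_0[OF pc] by simp
qed

lemma main:
  assumes T: "\<forall>I J. brace_ideal R J \<and> brace_ideal (R\<lparr>carrier := J\<rparr>) I \<longrightarrow> brace_ideal R I"
  shows "a \<in> Zs R n \<Longrightarrow> st a a = \<zero> \<Longrightarrow> group.ord (add_monoid R) a = 0 \<Longrightarrow> a \<in> Zs R (Suc 0)"
proof (induction n arbitrary: a)
  case 0
  hence "a = \<zero>" by simp
  thus ?case using idl_zero[OF Zs_ideal] by blast
next
  case (Suc m a)
  have aZ: "a \<in> Zs R (Suc m)" by fact
  have ac: "a \<in> carrier R" using idl_car[OF Zs_ideal aZ] .
  have aa: "st a a = \<zero>" by fact
  have oa: "group.ord (add_monoid R) a = 0" by fact
  have CI: "brace_ideal R (C a)" using C_ideal[OF ac aa T aZ] .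
  have Ceq: "C a = range (\<lambda>k. pw k a)" using C_def ac aa by simp
  have Ca: "pw k a \<in> C a" for k unfolding Ceq by simp
  have aN: "\<forall>x\<in>carrier R. st a x \<in> Zs R m \<and> st x a \<in> Zs R m" using aZ by (simp add: nextZ_def)
  have sq: "pw (t * t) a \<noteq> \<zero>" if "t \<noteq> 0" for t using pw_ne0[OF ac oa] that by simp
  have IH: "pw t a \<in> Zs R (Suc 0)" if t: "t \<noteq> 0" and p: "pw t a \<in> Zs R m" for t
  proof -
    have "st (pw t a) (pw t a) = \<zero>" using C_triv[OF ac aa Ca Ca] .
    thus ?thesis using Suc.IH[OF p] ord_pw[OF ac oa t] by simp
  qed
  have r1: "st x a = \<zero>" if x: "x \<in> carrier R" for x
  proof -
    have "st x a \<in> C a" using idl_stl[OF CI x C_a[OF ac aa]] .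
    then obtain t where t: "st x a = pw t a" unfolding Ceq by auto
    show ?thesis
    proof (rule ccontr)
      assume ne: "st x a \<noteq> \<zero>"
      hence t0: "t \<noteq> 0" using t by auto
      have p: "pw t a \<in> Zs R m" using aN x t by auto
      have "pw t a \<in> Zs R (Suc 0)" using IH[OF t0 p] .
      hence "st x (pw t a) = \<zero>" using x by (simp add: nextZ_def)
      moreover have "st x (pw t a) = pw (t * t) a"
        using st_pow_r[OF x ac] t add.int_pow_pow[OF ac] by simp
      ultimately show False using sq[OF t0] by simp
    qed
  qed
  have r2: "st a x = \<zero>" if x: "x \<in> carrier R" for x
  proof -
    have "st a x \<in> C a" using idl_str[OF CI x C_a[OF ac aa]] .
    then obtain s where s: "st a x = pw s a" unfolding Ceq by auto
    show ?thesis
    proof (rule ccontr)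
      assume ne: "st a x \<noteq> \<zero>"
      hence s0: "s \<noteq> 0" using s by auto
      have p: "pw s a \<in> Zs R m" using aN x s by auto
      have "pw s a \<in> Zs R (Suc 0)" using IH[OF s0 p] .
      hence z: "st (pw s a) x = \<zero>" using x by (simp add: nextZ_def)
      have hadd: "st (pw (k + l) a) x = st (pw k a) x \<oplus> st (pw l a) x" for k l
      proof -
        have pc: "pw k a \<in> carrier R" "pw l a \<in> carrier R" using ac by auto
        have "pw (k + l) a = pw k a \<oplus> pw l a" using add.int_pow_mult[OF ac] by simp
        also have "\<dots> = pw k a \<otimes> pw l a" using C_mult[OF ac aa Ca Ca] by simp
        finally have "st (pw (k + l) a) x = st (pw k a \<otimes> pw l a) x" by simp
        also have "\<dots> = st (pw k a) (st (pw l a) x) \<oplus> st (pw k a) x \<oplus> st (pw l a) x"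
          using st_mult_l pc x by simp
        also have "st (pw k a) (st (pw l a) x) = \<zero>"
          using C_triv[OF ac aa Ca idl_str[OF CI x Ca]] .
        finally show ?thesis using pc x by simp
      qed
      have "(\<lambda>k. st (pw k a) x) s = pw s ((\<lambda>k. st (pw k a) x) 1)"
        by (rule add_hom_int) (use hadd ac x in auto)
      hence "st (pw s a) x = pw s (pw s a)" using s ac by simp
      also have "\<dots> = pw (s * s) a" using add.int_pow_pow[OF ac] by simp
      finally show False using z sq[OF s0] by simp
    qed
  qed
  show ?case using ac r1 r2 by (simp add: nextZ_def)
qed
end

theorem lemma3p2:
  fixes R :: "('a, 'm) ring_scheme" and n :: nat and a :: 'a
  assumes "T_brace R"
    and "a \<in> star_zeta R n - star_center R"
    and "group.ord (add_monoid R) a = 0"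
  shows "bstar R a a \<noteq> \<zero>\<^bsub>R\<^esub>"
proof
  assume aa: "bstar R a a = \<zero>\<^bsub>R\<^esub>"
  have br: "brace R" and T: "\<forall>I J. brace_ideal R J \<and> brace_ideal (R\<lparr>carrier := J\<rparr>) I \<longrightarrow> brace_ideal R I"
    using assms(1) unfolding T_brace_def by auto
  have "brc R" using br unfolding brace_def brc_def brc_axioms_def by auto
  then interpret brc R .
  have aZ: "a \<in> Zs R n" using assms(2) star_zeta_Zs by auto
  have "a \<in> Zs R (Suc 0)" using main[OF T aZ aa assms(3)] .
  moreover have "Zs R (Suc 0) = star_center R" by (auto simp: nextZ_def star_center_def)
  ultimately show False using assms(2) by simp
qed

end
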